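(* Let $R$ be a finite local Frobenius ring with a fixed primitive additive character $\psi$. Let $\tau$ be any multiplicative character of $R$ and let $\chi$ be a primitive multiplicative character of $R$. Then $$\sum_{a\in R^\times}\chi(a)\,|K_\tau(a)|^2=\tau(-1)\,J(\chi\tau,\chi\overline{\tau})\,G(\chi)^2.$$
   Context: All rings are finite and commutative with identity; $R^\times$ is the unit group; $M$ is the maximal ideal. An additive character $(R,+)\to\mathbb{C}^*$ is primitive if the only ideal on which it is identically $1$ is $(0)$; $R$ is Frobenius if such a character exists. A multiplicative character is a homomorphism $R^\times\to\mathbb{C}^*$; its conductor is $R$ if it is trivial, and otherwise the largest ideal $I\subseteq M$ such that it is identically $1$ on $1+I$; it is primitive if its conductor is $(0)$. $K_\tau(a)=\sum_{u\in R^\times}\tau(u)\psi(u+au^{-1})$; Gauss sum $G(\chi)=\sum_{u\in R^\times}\psi(u)\chi(u)$; Jacobi sum $J(\chi,\eta)=\sum_{u,v\in R^\times,\,u+v=1}\chi(u)\eta(v)$; $\overline{\tau}$ is the complex conjugate (inverse) character. *)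

theory Defs
  imports Complex_Main
begin

definition ring_ideal :: "'a::comm_ring_1 set \<Rightarrow> bool" where
  "ring_ideal I \<longleftrightarrow> 0 \<in> I \<and> (\<forall>x\<in>I. \<forall>y\<in>I. x + y \<in> I) \<and> (\<forall>r. \<forall>x\<in>I. r * x \<in> I)"

definition maximal_ideal :: "'a::comm_ring_1 set \<Rightarrow> bool" where
  "maximal_ideal M \<longleftrightarrow> ring_ideal M \<and> M \<noteq> UNIV \<and>
     (\<forall>J. ring_ideal J \<and> M \<subseteq> J \<and> J \<noteq> UNIV \<longrightarrow> J = M)"

definition local_ring :: "'a::comm_ring_1 itself \<Rightarrow> bool" where
  "local_ring _ \<longleftrightarrow> (\<exists>!M::'a set. maximal_ideal M)"

definition the_max_ideal :: "'a::comm_ring_1 set" where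
  "the_max_ideal = (THE M. maximal_ideal M)"

definition ring_units :: "'a::comm_ring_1 set" where
  "ring_units = {u. u dvd 1}"

definition ring_inv :: "'a::comm_ring_1 \<Rightarrow> 'a" where
  "ring_inv u = (THE v. u * v = 1)"

definition add_char :: "('a::comm_ring_1 \<Rightarrow> complex) \<Rightarrow> bool" where
  "add_char \<psi> \<longleftrightarrow> (\<forall>x. \<psi> x \<noteq> 0) \<and> (\<forall>x y. \<psi> (x + y) = \<psi> x * \<psi> y)"

definition primitive_add_char :: "('a::comm_ring_1 \<Rightarrow> complex) \<Rightarrow> bool" where
  "primitive_add_char \<psi> \<longleftrightarrow> add_char \<psi> \<and>
     (\<forall>I. ring_ideal I \<and> (\<forall>x\<in>I. \<psi> x = 1) \<longrightarrow> I = {0})"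

definition frobenius_ring :: "'a::comm_ring_1 itself \<Rightarrow> bool" where
  "frobenius_ring _ \<longleftrightarrow> (\<exists>\<psi>::'a \<Rightarrow> complex. primitive_add_char \<psi>)"

text \<open>Multiplicative characters R^x to C^*; only values on units matter.\<close>

definition mult_char :: "('a::comm_ring_1 \<Rightarrow> complex) \<Rightarrow> bool" where
  "mult_char \<chi> \<longleftrightarrow> (\<forall>u\<in>ring_units. \<chi> u \<noteq> 0) \<and>
     (\<forall>u\<in>ring_units. \<forall>v\<in>ring_units. \<chi> (u * v) = \<chi> u * \<chi> v)"

definition trivial_mult_char :: "('a::comm_ring_1 \<Rightarrow> complex) \<Rightarrow> bool" where
  "trivial_mult_char \<chi> \<longleftrightarrow> (\<forall>u\<in>ring_units. \<chi> u = 1)"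

text \<open>Conductor (0): nontrivial, and every ideal I inside M with chi = 1 on 1+I is (0)
  (equivalently the largest such ideal is (0)).\<close>

definition primitive_mult_char :: "('a::comm_ring_1 \<Rightarrow> complex) \<Rightarrow> bool" where
  "primitive_mult_char \<chi> \<longleftrightarrow> mult_char \<chi> \<and> \<not> trivial_mult_char \<chi> \<and>
     (\<forall>I. ring_ideal I \<and> I \<subseteq> the_max_ideal \<and> (\<forall>x\<in>I. \<chi> (1 + x) = 1) \<longrightarrow> I = {0})"

definition kloosterman :: "('a::comm_ring_1 \<Rightarrow> complex) \<Rightarrow> ('a \<Rightarrow> complex) \<Rightarrow> 'a \<Rightarrow> complex" where
  "kloosterman \<psi> \<tau> a = (\<Sum>u\<in>ring_units. \<tau> u * \<psi> (u + a * ring_inv u))"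

definition gauss_sum :: "('a::comm_ring_1 \<Rightarrow> complex) \<Rightarrow> ('a \<Rightarrow> complex) \<Rightarrow> complex" where
  "gauss_sum \<psi> \<chi> = (\<Sum>u\<in>ring_units. \<psi> u * \<chi> u)"

definition jacobi_sum :: "('a::comm_ring_1 \<Rightarrow> complex) \<Rightarrow> ('a \<Rightarrow> complex) \<Rightarrow> complex" where
  "jacobi_sum \<chi> \<eta> = (\<Sum>(u, v)\<in>{(u, v). u \<in> ring_units \<and> v \<in> ring_units \<and> u + v = 1}. \<chi> u * \<eta> v)"

end

theory Submission imports Defs begin

lemma units_mult: "u \<in> ring_units \<Longrightarrow> v \<in> ring_units \<Longrightarrow> u * v \<in> ring_units"
  unfolding ring_units_def using mult_dvd_mono[of u 1 v 1] by simp

lemma one_unit[simp]: "(1::'a::comm_ring_1) \<in> ring_units" by (simp add: ring_units_def)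
lemma minus_unit: "u \<in> ring_units \<Longrightarrow> - u \<in> ring_units" by (simp add: ring_units_def)

lemma ring_inv_right: assumes "u \<in> ring_units" shows "u * ring_inv u = 1"
proof -
  from assms have "u dvd 1" by (simp add: ring_units_def)
  then obtain v where v0: "1 = u * v" by (rule dvdE)
  then have v: "u * v = 1" by (rule sym)
  have uq: "\<And>w. u * w = 1 \<Longrightarrow> w = v"
  proof -
    fix w assume w: "u * w = 1"
    have "w = w * (u * v)" using v by (metis mult_1_right)
    also have "\<dots> = (u * w) * v" by (metis mult.assoc mult.commute)
    finally show "w = v" using w by (metis mult_1_left)
  qed
  have "ring_inv u = v" unfolding ring_inv_def by (rule the_equality) (fact v, erule uq)
  then show ?thesis using v by metis
qed

lemma ring_inv_left: "u \<in> ring_units \<Longrightarrow> ring_inv u * u = 1"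
  using ring_inv_right by (simp add: mult.commute)

lemma ring_inv_unique: assumes "u * v = 1" shows "ring_inv u = v"
proof -
  have "u dvd 1" using assms by (metis dvdI)
  then have u: "u \<in> ring_units" by (simp add: ring_units_def)
  have "ring_inv u = ring_inv u * (u * v)" using assms by (metis mult_1_right)
  also have "\<dots> = v" using ring_inv_left[OF u] by (metis mult.assoc mult_1_left)
  finally show ?thesis .
qed

lemma ring_inv_unit: "u \<in> ring_units \<Longrightarrow> ring_inv u \<in> ring_units"
proof -
  assume "u \<in> ring_units"
  then have "1 = ring_inv u * u" using ring_inv_left by simp
  then have "ring_inv u dvd 1" by (rule dvdI)
  then show ?thesis by (simp add: ring_units_def)
qed

lemma ring_inv_mult: "u \<in> ring_units \<Longrightarrow> v \<in> ring_units \<Longrightarrow> ring_inv (u*v) = ring_inv u * ring_inv v"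
  apply (rule ring_inv_unique)
  using ring_inv_right[of u] ring_inv_right[of v]
  by (metis mult.assoc mult.commute mult_1_right)

lemma ring_inv_inv: "u \<in> ring_units \<Longrightarrow> ring_inv (ring_inv u) = u"
  by (rule ring_inv_unique) (simp add: ring_inv_left)

lemma ring_inv_minus: "u \<in> ring_units \<Longrightarrow> ring_inv (- u) = - ring_inv u"
  by (rule ring_inv_unique) (simp add: ring_inv_right)

lemma finite_units[simp]: "finite (ring_units :: 'a::{comm_ring_1,finite} set)" by simp

lemma sum_units_shift:
  fixes f :: "'a::{comm_ring_1,finite} \<Rightarrow> complex"
  assumes w: "w \<in> ring_units"
  shows "sum f ring_units = sum (\<lambda>a. f (w * a)) ring_units"
  by (rule sum.reindex_bij_witness[where i="\<lambda>a. w * a" and j="\<lambda>a. ring_inv w * a"])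
     (auto simp: units_mult ring_inv_unit w mult.assoc[symmetric] ring_inv_left ring_inv_right)

lemma prod_units_shift:
  fixes f :: "'a::{comm_ring_1,finite} \<Rightarrow> complex"
  assumes w: "w \<in> ring_units"
  shows "prod f ring_units = prod (\<lambda>a. f (w * a)) ring_units"
  by (rule prod.reindex_bij_witness[where i="\<lambda>a. w * a" and j="\<lambda>a. ring_inv w * a"])
     (auto simp: units_mult ring_inv_unit w mult.assoc[symmetric] ring_inv_left ring_inv_right)

lemma sum_zero_if_shift:
  fixes f :: "'a::{comm_ring_1,finite} \<Rightarrow> complex"
  assumes w: "w \<in> ring_units" and c: "c \<noteq> 1" and eq: "\<And>a. a \<in> ring_units \<Longrightarrow> f (w * a) = c * f a"
  shows "sum f ring_units = 0"
proof -
  have "sum f ring_units = sum (\<lambda>a. c * f a) ring_units"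
    using sum_units_shift[OF w, of f] eq by simp
  also have "\<dots> = c * sum f ring_units" by (simp add: sum_distrib_left)
  finally have "(1 - c) * sum f ring_units = 0" by (simp add: algebra_simps)
  then show ?thesis using c by simp
qed

lemma mult_char_one: assumes "mult_char \<tau>" shows "\<tau> 1 = 1"
proof -
  have "\<tau> 1 = \<tau> 1 * \<tau> 1" using assms unfolding mult_char_def by (metis one_unit mult_1_left)
  moreover have "\<tau> 1 \<noteq> 0" using assms unfolding mult_char_def by simp
  ultimately show ?thesis by (metis mult_cancel_left1)
qed

lemma mult_char_norm:
  fixes \<tau> :: "'a::{comm_ring_1,finite} \<Rightarrow> complex"
  assumes t: "mult_char \<tau>" and w: "w \<in> ring_units"
  shows "norm (\<tau> w) = 1"
proof -
  let ?P = "prod \<tau> ring_units"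
  have P0: "?P \<noteq> 0" using t by (auto simp: mult_char_def)
  have "?P = prod (\<lambda>a. \<tau> w * \<tau> a) ring_units"
    using prod_units_shift[OF w, of \<tau>] t w by (simp add: mult_char_def)
  also have "\<dots> = \<tau> w ^ card (ring_units::'a set) * ?P" by (simp add: prod.distrib)
  finally have "\<tau> w ^ card (ring_units::'a set) = 1" using P0 by simp
  then have "norm (\<tau> w) ^ card (ring_units::'a set) = 1" by (metis norm_power norm_one)
  moreover have "card (ring_units::'a set) > 0" using w by (auto simp: card_gt_0_iff)
  ultimately show ?thesis using power_eq_imp_eq_base[of "norm (\<tau> w)" "card (ring_units::'a set)" 1] by simp
qed

lemma add_char_norm:
  fixes \<psi> :: "'a::{comm_ring_1,finite} \<Rightarrow> complex"
  assumes t: "add_char \<psi>"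
  shows "norm (\<psi> w) = 1"
proof -
  let ?P = "prod \<psi> UNIV"
  have P0: "?P \<noteq> 0" using t by (auto simp: add_char_def)
  have "?P = prod (\<lambda>a. \<psi> (w + a)) UNIV"
    by (rule prod.reindex_bij_witness[where i="\<lambda>a. w + a" and j="\<lambda>a. a - w"]) auto
  also have "\<dots> = \<psi> w ^ card (UNIV::'a set) * ?P" using t by (simp add: prod.distrib add_char_def)
  finally have "\<psi> w ^ card (UNIV::'a set) = 1" using P0 by simp
  then have "norm (\<psi> w) ^ card (UNIV::'a set) = 1" by (metis norm_power norm_one)
  moreover have "card (UNIV::'a set) > 0" by (simp add: card_gt_0_iff)
  ultimately show ?thesis using power_eq_imp_eq_base[of "norm (\<psi> w)" "card (UNIV::'a set)" 1] by simp
qed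

lemma norm1_cnj: "norm (z::complex) = 1 \<Longrightarrow> cnj z * z = 1"
  by (metis complex_norm_square mult.commute of_real_1 power_one)

lemma mult_char_cnj:
  fixes \<tau> :: "'a::{comm_ring_1,finite} \<Rightarrow> complex"
  assumes t: "mult_char \<tau>" and w: "w \<in> ring_units"
  shows "cnj (\<tau> w) = \<tau> (ring_inv w)"
proof -
  have "\<tau> w * \<tau> (ring_inv w) = 1" using t w ring_inv_unit[OF w] ring_inv_right[OF w] mult_char_one[OF t]
    by (metis mult_char_def)
  moreover have "cnj (\<tau> w) * \<tau> w = 1" using norm1_cnj mult_char_norm[OF t w] by simp
  ultimately show ?thesis by (metis mult.assoc mult.commute mult_1_left)
qed

lemma add_char_zero: assumes "add_char \<psi>" shows "\<psi> 0 = 1"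
  using assms unfolding add_char_def by (metis add_0 mult_cancel_left1)

lemma add_char_cnj:
  fixes \<psi> :: "'a::{comm_ring_1,finite} \<Rightarrow> complex"
  assumes t: "add_char \<psi>"
  shows "cnj (\<psi> w) = \<psi> (- w)"
proof -
  have "\<psi> w * \<psi> (- w) = 1" using t add_char_zero[OF t] by (metis add_char_def add.right_inverse)
  moreover have "cnj (\<psi> w) * \<psi> w = 1" using norm1_cnj add_char_norm[OF t] by simp
  ultimately show ?thesis by (metis mult.assoc mult.commute mult_1_left)
qed


lemma exists_maximal_above:
  fixes J :: "'a::{comm_ring_1,finite} set"
  shows "ring_ideal J \<Longrightarrow> J \<noteq> UNIV \<Longrightarrow> \<exists>M. maximal_ideal M \<and> J \<subseteq> M"
proof (induction "card (UNIV - J)" arbitrary: J rule: less_induct)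
  case less
  show ?case
  proof (cases "maximal_ideal J")
    case True then show ?thesis by blast
  next
    case False
    then obtain K where K: "ring_ideal K" "J \<subseteq> K" "K \<noteq> UNIV" "K \<noteq> J"
      using less.prems unfolding maximal_ideal_def by blast
    then have "UNIV - K \<subset> UNIV - J" by blast
    then have "card (UNIV - K) < card (UNIV - J)" by (simp add: psubset_card_mono)
    then obtain M where "maximal_ideal M" "K \<subseteq> M" using less.hyps K by blast
    then show ?thesis using K by blast
  qed
qed

lemma local_max:
  fixes M :: "'a::{comm_ring_1,finite} set"
  assumes "local_ring TYPE('a)"
  shows "maximal_ideal (the_max_ideal :: 'a set)"
    and "maximal_ideal M \<Longrightarrow> M = the_max_ideal"
proof -
  have "\<exists>!M::'a set. maximal_ideal M" using assms unfolding local_ring_def .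
  then obtain M0 :: "'a set" where M0a: "maximal_ideal M0" and M0b: "\<forall>N. maximal_ideal N \<longrightarrow> N = M0"
    by (rule ex1E)
  have M0: "maximal_ideal M0" "\<And>N. maximal_ideal N \<Longrightarrow> N = M0" using M0a M0b by blast+
  have "the_max_ideal = M0" unfolding the_max_ideal_def by (rule the_equality) (fact M0(1), erule M0(2))
  then show "maximal_ideal (the_max_ideal :: 'a set)" using M0(1) by (rule ssubst)
  show "maximal_ideal M \<Longrightarrow> M = the_max_ideal" using \<open>the_max_ideal = M0\<close> by (metis M0(2))
qed

lemma proper_in_max:
  fixes J :: "'a::{comm_ring_1,finite} set"
  assumes "local_ring TYPE('a)" "ring_ideal J" "J \<noteq> UNIV"
  shows "J \<subseteq> the_max_ideal"
  using exists_maximal_above[OF assms(2,3)] local_max(2)[OF assms(1)] by blast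

lemma one_plus_max_unit:
  fixes x :: "'a::{comm_ring_1,finite}"
  assumes L: "local_ring TYPE('a)" and x: "x \<in> the_max_ideal"
  shows "1 + x \<in> ring_units"
proof (rule ccontr)
  assume nu: "1 + x \<notin> ring_units"
  let ?J = "{(1 + x) * r | r. True}"
  have "ring_ideal ?J" unfolding ring_ideal_def
  proof (intro conjI ballI allI)
    have "0 = (1 + x) * 0" by simp
    then show "0 \<in> ?J" by blast
  next
    fix p q assume "p \<in> ?J" "q \<in> ?J"
    then obtain r s where "p = (1 + x) * r" "q = (1 + x) * s" by blast
    then have "p + q = (1 + x) * (r + s)" by (simp add: distrib_left)
    then show "p + q \<in> ?J" by blast
  next
    fix c p assume "p \<in> ?J"
    then obtain r where "p = (1 + x) * r" by blast
    then have "c * p = (1 + x) * (c * r)" by (simp add: mult.left_commute)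
    then show "c * p \<in> ?J" by blast
  qed
  moreover have "?J \<noteq> UNIV"
  proof
    assume "?J = UNIV"
    then have "(1::'a) \<in> ?J" by simp
    then obtain r where "1 = (1 + x) * r" by blast
    then have "1 + x dvd 1" by (rule dvdI)
    then have "1 + x \<in> ring_units" by (simp add: ring_units_def)
    then show False using nu by simp
  qed
  ultimately have "?J \<subseteq> the_max_ideal" using proper_in_max[OF L] by blast
  moreover have "1 + x \<in> ?J" by (rule CollectI, rule exI[of _ 1]) simp
  ultimately have h1: "1 + x \<in> the_max_ideal" by blast
  have MI: "maximal_ideal (the_max_ideal::'a set)" by (rule local_max(1)[OF L])
  then have I: "ring_ideal (the_max_ideal::'a set)" "the_max_ideal \<noteq> (UNIV::'a set)"
    unfolding maximal_ideal_def by blast+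
  have "(-1) * x \<in> the_max_ideal" using I(1) x unfolding ring_ideal_def by blast
  then have "(1 + x) + (-1) * x \<in> the_max_ideal" using I(1) h1 unfolding ring_ideal_def by blast
  then have one: "(1::'a) \<in> the_max_ideal" by simp
  have "the_max_ideal = (UNIV::'a set)"
  proof -
    have "\<And>r::'a. r * 1 \<in> the_max_ideal" using I(1) one unfolding ring_ideal_def by blast
    then show ?thesis by auto
  qed
  then show False using I(2) by simp
qed

lemma char_sum_vanish:
  fixes \<chi> \<psi> :: "'a::{comm_ring_1,finite} \<Rightarrow> complex"
  assumes L: "local_ring TYPE('a)" and chi: "primitive_mult_char \<chi>" and psi: "add_char \<psi>"
    and b: "b \<notin> ring_units"
  shows "(\<Sum>a\<in>ring_units. \<chi> a * \<psi> (a * b)) = 0"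
proof (cases "b = 0")
  case True
  from chi obtain w where w: "w \<in> ring_units" "\<chi> w \<noteq> 1"
    unfolding primitive_mult_char_def trivial_mult_char_def by blast
  show ?thesis
    apply (rule sum_zero_if_shift[OF w])
    using True chi w(1) by (auto simp: primitive_mult_char_def mult_char_def)
next
  case False
  let ?I = "{x. x * b = 0}"
  have I: "ring_ideal ?I" unfolding ring_ideal_def by (auto simp: algebra_simps)
  have "(1::'a) \<notin> ?I" using False by simp
  then have "?I \<noteq> UNIV" by blast
  then have IM: "?I \<subseteq> the_max_ideal" using proper_in_max[OF L I] by blast
  have "\<not> surj (\<lambda>x. x * b)"
  proof
    assume "surj (\<lambda>x. x * b)"
    then obtain c where "1 = c * b" by (metis surjD)
    then have "1 = b * c" by (simp add: mult.commute)
    then have "b dvd 1" by (rule dvdI)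
    then show False using b by (simp add: ring_units_def)
  qed
  then have "\<not> inj (\<lambda>x. x * b)" using finite_UNIV_inj_surj[OF finite_UNIV] by blast
  then obtain c d where cd: "c \<noteq> d" "c * b = d * b" unfolding inj_def by blast
  then have "c - d \<in> ?I" "c - d \<noteq> 0" by (auto simp: algebra_simps)
  then have "?I \<noteq> {0}" by blast
  then obtain x where x: "x * b = 0" "\<chi> (1 + x) \<noteq> 1"
    using chi I IM unfolding primitive_mult_char_def by blast
  have xm: "x \<in> the_max_ideal" using IM x(1) by blast
  have w: "1 + x \<in> ring_units" by (rule one_plus_max_unit[OF L xm])
  show ?thesis
  proof (rule sum_zero_if_shift[OF w x(2)])
    fix a :: 'a assume a: "a \<in> ring_units"
    have "(1 + x) * a * b = a * b" using x(1) by (simp add: algebra_simps)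
    then show "\<chi> ((1 + x) * a) * \<psi> ((1 + x) * a * b) = \<chi> (1 + x) * (\<chi> a * \<psi> (a * b))"
      using chi w a by (simp add: primitive_mult_char_def mult_char_def)
  qed
qed

lemma char_sum_unit:
  fixes \<chi> \<psi> :: "'a::{comm_ring_1,finite} \<Rightarrow> complex"
  assumes chi: "mult_char \<chi>" and b: "b \<in> ring_units"
  shows "(\<Sum>a\<in>ring_units. \<chi> a * \<psi> (a * b)) = \<chi> (ring_inv b) * gauss_sum \<psi> \<chi>"
proof -
  have bi: "ring_inv b \<in> ring_units" using ring_inv_unit[OF b] .
  have "(\<Sum>a\<in>ring_units. \<chi> a * \<psi> (a * b)) = (\<Sum>a\<in>ring_units. \<chi> (ring_inv b * a) * \<psi> (ring_inv b * a * b))"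
    by (rule sum_units_shift[OF bi])
  also have "\<dots> = (\<Sum>a\<in>ring_units. \<chi> (ring_inv b) * (\<psi> a * \<chi> a))"
  proof (rule sum.cong[OF refl])
    fix a :: 'a assume a: "a \<in> ring_units"
    have "ring_inv b * a * b = a" using ring_inv_left[OF b] by (metis mult.assoc mult.commute mult_1_right)
    then show "\<chi> (ring_inv b * a) * \<psi> (ring_inv b * a * b) = \<chi> (ring_inv b) * (\<psi> a * \<chi> a)"
      using chi a bi by (simp add: mult_char_def)
  qed
  finally show ?thesis by (simp add: gauss_sum_def sum_distrib_left)
qed


lemma K_sq:
  fixes \<psi> \<tau> :: "'a::{comm_ring_1,finite} \<Rightarrow> complex"
  assumes psi: "add_char \<psi>" and tau: "mult_char \<tau>"
  shows "complex_of_real ((cmod (kloosterman \<psi> \<tau> a))\<^sup>2) =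
     (\<Sum>u\<in>ring_units. \<Sum>v\<in>ring_units. \<tau> u * cnj (\<tau> v) * \<psi> (u - v) * \<psi> (a * (ring_inv u - ring_inv v)))"
proof -
  have "complex_of_real ((cmod (kloosterman \<psi> \<tau> a))\<^sup>2) = kloosterman \<psi> \<tau> a * cnj (kloosterman \<psi> \<tau> a)"
    by (rule complex_norm_square)
  also have "\<dots> = (\<Sum>u\<in>ring_units. \<Sum>v\<in>ring_units. (\<tau> u * \<psi> (u + a * ring_inv u)) * (cnj (\<tau> v) * cnj (\<psi> (v + a * ring_inv v))))"
    unfolding kloosterman_def by (simp add: sum_product)
  also have "\<dots> = (\<Sum>u\<in>ring_units. \<Sum>v\<in>ring_units. \<tau> u * cnj (\<tau> v) * \<psi> (u - v) * \<psi> (a * (ring_inv u - ring_inv v)))"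
  proof (intro sum.cong refl)
    fix u v
    have "\<psi> (u + a * ring_inv u) * cnj (\<psi> (v + a * ring_inv v)) = \<psi> (u + a * ring_inv u + - (v + a * ring_inv v))"
      using psi add_char_cnj[OF psi, of "v + a * ring_inv v"] unfolding add_char_def by metis
    also have "u + a * ring_inv u + - (v + a * ring_inv v) = (u - v) + a * (ring_inv u - ring_inv v)"
      by (simp add: algebra_simps)
    also have "\<psi> \<dots> = \<psi> (u - v) * \<psi> (a * (ring_inv u - ring_inv v))" using psi by (simp add: add_char_def)
    finally show "(\<tau> u * \<psi> (u + a * ring_inv u)) * (cnj (\<tau> v) * cnj (\<psi> (v + a * ring_inv v))) =
        \<tau> u * cnj (\<tau> v) * \<psi> (u - v) * \<psi> (a * (ring_inv u - ring_inv v))"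
      by (simp add: ac_simps)
  qed
  finally show ?thesis .
qed

lemma key_inv:
  fixes w x y :: "'a::comm_ring_1"
  assumes w: "w \<in> ring_units" and x: "x \<in> ring_units" and y: "y \<in> ring_units" and s: "x + y = 1"
  shows "ring_inv (w * x) - ring_inv (- (w * y)) = ring_inv w * ring_inv x * ring_inv y"
proof -
  have l: "ring_inv (w * x) - ring_inv (- (w * y)) = ring_inv w * ring_inv x + ring_inv w * ring_inv y"
    using w x y by (simp add: ring_inv_mult ring_inv_minus units_mult)
  have "ring_inv w * ring_inv x * ring_inv y = ring_inv w * ring_inv x * ring_inv y * (x + y)" using s by simp
  also have "\<dots> = ring_inv w * ring_inv y * (ring_inv x * x) + ring_inv w * ring_inv x * (ring_inv y * y)"
    by (simp add: algebra_simps)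
  also have "\<dots> = ring_inv w * ring_inv y + ring_inv w * ring_inv x"
    using ring_inv_left[OF x] ring_inv_left[OF y] by simp
  finally show ?thesis using l by (simp add: add.commute)
qed

lemma unit_diff:
  fixes u v :: "'a::comm_ring_1"
  assumes u: "u \<in> ring_units" and v: "v \<in> ring_units" and d: "ring_inv u - ring_inv v \<in> ring_units"
  shows "u - v \<in> ring_units"
proof -
  have "- (u * v) * (ring_inv u - ring_inv v) = - ((u * ring_inv u) * v) + (v * ring_inv v) * u"
    by (simp add: algebra_simps)
  also have "\<dots> = u - v" using ring_inv_right[OF u] ring_inv_right[OF v] by simp
  finally have "u - v = - (u * v) * (ring_inv u - ring_inv v)" by (rule sym)
  then show ?thesis using u v d by (simp add: units_mult minus_unit)
qed


theorem mainTheorem8: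
  fixes \<psi> \<tau> \<chi> :: "'a::{comm_ring_1, finite} \<Rightarrow> complex"
  assumes "local_ring TYPE('a)"
    and "frobenius_ring TYPE('a)"
    and "primitive_add_char \<psi>"
    and "mult_char \<tau>"
    and "primitive_mult_char \<chi>"
  shows "(\<Sum>a\<in>ring_units. \<chi> a * complex_of_real ((cmod (kloosterman \<psi> \<tau> a))\<^sup>2))
         = \<tau> (-1) * jacobi_sum (\<lambda>u. \<chi> u * \<tau> u) (\<lambda>u. \<chi> u * cnj (\<tau> u))
           * (gauss_sum \<psi> \<chi>)\<^sup>2"
proof -
  note L = assms(1) and tau = assms(4) and chi = assms(5)
  have psi: "add_char \<psi>" using assms(3) by (simp add: primitive_add_char_def)
  have chim: "mult_char \<chi>" using chi by (simp add: primitive_mult_char_def)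
  let ?U = "ring_units :: 'a set"
  let ?G = "gauss_sum \<psi> \<chi>"
  define g where "g = (\<lambda>(u::'a, v::'a). \<tau> u * cnj (\<tau> v) * \<psi> (u - v) *
      (if ring_inv u - ring_inv v \<in> ?U then \<chi> (ring_inv (ring_inv u - ring_inv v)) else 0))"
  define P where "P = {p \<in> ?U \<times> ?U. ring_inv (fst p) - ring_inv (snd p) \<in> ?U}"
  define Q where "Q = {(u, v). u \<in> ?U \<and> v \<in> ?U \<and> u + v = (1::'a)}"
  define f where "f = (\<lambda>(w::'a, (x::'a, y::'a)). \<tau> (-1) * ((\<psi> w * \<chi> w) * ((\<chi> x * \<tau> x) * (\<chi> y * cnj (\<tau> y)))))"
  have "(\<Sum>a\<in>?U. \<chi> a * complex_of_real ((cmod (kloosterman \<psi> \<tau> a))\<^sup>2))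
      = (\<Sum>a\<in>?U. \<chi> a * (\<Sum>u\<in>?U. \<Sum>v\<in>?U. \<tau> u * cnj (\<tau> v) * \<psi> (u - v) * \<psi> (a * (ring_inv u - ring_inv v))))"
    by (rule sum.cong[OF refl]) (simp only: K_sq[OF psi tau])
  also have "\<dots> = (\<Sum>u\<in>?U. \<Sum>v\<in>?U. \<tau> u * cnj (\<tau> v) * \<psi> (u - v) *
        (\<Sum>a\<in>?U. \<chi> a * \<psi> (a * (ring_inv u - ring_inv v))))"
  proof -
    let ?F = "\<lambda>u v a. \<tau> u * cnj (\<tau> v) * \<psi> (u - v) * \<psi> (a * (ring_inv u - ring_inv v))"
    have "(\<Sum>a\<in>?U. \<chi> a * (\<Sum>u\<in>?U. \<Sum>v\<in>?U. ?F u v a)) = (\<Sum>a\<in>?U. \<Sum>u\<in>?U. \<Sum>v\<in>?U. \<chi> a * ?F u v a)"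
      by (simp only: sum_distrib_left)
    also have "\<dots> = (\<Sum>u\<in>?U. \<Sum>a\<in>?U. \<Sum>v\<in>?U. \<chi> a * ?F u v a)" by (rule sum.swap)
    also have "\<dots> = (\<Sum>u\<in>?U. \<Sum>v\<in>?U. \<Sum>a\<in>?U. \<chi> a * ?F u v a)" by (rule sum.cong[OF refl], rule sum.swap)
    also have "\<dots> = (\<Sum>u\<in>?U. \<Sum>v\<in>?U. \<tau> u * cnj (\<tau> v) * \<psi> (u - v) *
        (\<Sum>a\<in>?U. \<chi> a * \<psi> (a * (ring_inv u - ring_inv v))))"
    proof (intro sum.cong refl)
      fix u v
      show "(\<Sum>a\<in>?U. \<chi> a * ?F u v a) = \<tau> u * cnj (\<tau> v) * \<psi> (u - v) *
        (\<Sum>a\<in>?U. \<chi> a * \<psi> (a * (ring_inv u - ring_inv v)))"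
        unfolding sum_distrib_left by (rule sum.cong[OF refl]) (simp only: ac_simps)
    qed
    finally show ?thesis .
  qed
  also have "\<dots> = (\<Sum>u\<in>?U. \<Sum>v\<in>?U. ?G * g (u, v))"
  proof (intro sum.cong refl)
    fix u v
    show "\<tau> u * cnj (\<tau> v) * \<psi> (u - v) * (\<Sum>a\<in>?U. \<chi> a * \<psi> (a * (ring_inv u - ring_inv v))) = ?G * g (u, v)"
      by (cases "ring_inv u - ring_inv v \<in> ?U")
         (simp_all add: g_def char_sum_unit[OF chim] char_sum_vanish[OF L chi psi])
  qed
  also have "\<dots> = ?G * (\<Sum>p\<in>?U \<times> ?U. g p)"
    by (simp add: sum_distrib_left sum.cartesian_product)
  also have "(\<Sum>p\<in>?U \<times> ?U. g p) = (\<Sum>p\<in>P. g p)"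
    by (rule sum.mono_neutral_right) (auto simp: P_def g_def split: if_splits)
  also have "\<dots> = (\<Sum>p\<in>?U \<times> Q. f p)"
  proof (rule sym, rule sum.reindex_bij_witness[where j = "\<lambda>(w, (x, y)). (w * x, - (w * y))"
        and i = "\<lambda>(u, v). (u - v, (u * ring_inv (u - v), - (v * ring_inv (u - v))))"])
    fix p assume "p \<in> P"
    then obtain u v where p: "p = (u, v)" and u: "u \<in> ?U" and v: "v \<in> ?U"
      and d: "ring_inv u - ring_inv v \<in> ?U" by (auto simp: P_def)
    have uv: "u - v \<in> ?U" by (rule unit_diff[OF u v d])
    have r: "(u - v) * ring_inv (u - v) = 1" by (rule ring_inv_right[OF uv])
    have "(u - v) * (u * ring_inv (u - v)) = u" "- ((u - v) * - (v * ring_inv (u - v))) = v"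
      using r by (simp_all add: algebra_simps)
    then show "(\<lambda>(w, (x, y)). (w * x, - (w * y))) ((\<lambda>(u, v). (u - v, (u * ring_inv (u - v), - (v * ring_inv (u - v))))) p) = p"
      using p by simp
    have "u * ring_inv (u - v) + - (v * ring_inv (u - v)) = 1" using r by (simp add: algebra_simps)
    then show "(\<lambda>(u, v). (u - v, (u * ring_inv (u - v), - (v * ring_inv (u - v))))) p \<in> ?U \<times> Q"
      using p u v uv by (simp add: Q_def units_mult minus_unit ring_inv_unit)
  next
    fix q assume "q \<in> ?U \<times> Q"
    then obtain w x y where q: "q = (w, (x, y))" and w: "w \<in> ?U" and x: "x \<in> ?U" and y: "y \<in> ?U"
      and s: "x + y = 1" by (auto simp: Q_def)
    have e1: "w * x - - (w * y) = w" using s by (metis diff_minus_eq_add distrib_left mult_1_right)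
    have e2: "w * x * ring_inv w = x" using ring_inv_right[OF w] by (metis mult.assoc mult.commute mult_1_right)
    have e3: "w * y * ring_inv w = y" using ring_inv_right[OF w] by (metis mult.assoc mult.commute mult_1_right)
    show "(\<lambda>(u, v). (u - v, (u * ring_inv (u - v), - (v * ring_inv (u - v))))) ((\<lambda>(w, (x, y)). (w * x, - (w * y))) q) = q"
      using q e1 e2 e3 by simp
    have ki: "ring_inv (w * x) - ring_inv (- (w * y)) = ring_inv w * ring_inv x * ring_inv y"
      by (rule key_inv[OF w x y s])
    have kiu: "ring_inv w * ring_inv x * ring_inv y \<in> ?U"
      using w x y by (simp add: units_mult ring_inv_unit)
    show "(\<lambda>(w, (x, y)). (w * x, - (w * y))) q \<in> P"
      using q w x y ki kiu by (simp add: P_def units_mult minus_unit)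
    have kii: "ring_inv (ring_inv w * ring_inv x * ring_inv y) = w * x * y"
      using w x y by (simp add: ring_inv_mult ring_inv_inv units_mult ring_inv_unit)
    have t1: "\<tau> (w * x) = \<tau> w * \<tau> x" using tau w x by (simp add: mult_char_def)
    have m1: "(-1::'a) \<in> ?U" by (simp add: minus_unit)
    have "\<tau> ((-1) * w * y) = \<tau> ((-1) * w) * \<tau> y"
      using tau m1 w y units_mult[OF m1 w] unfolding mult_char_def by blast
    also have "\<tau> ((-1) * w) = \<tau> (-1) * \<tau> w" using tau m1 w unfolding mult_char_def by blast
    finally have t2': "\<tau> ((-1) * w * y) = \<tau> (-1) * \<tau> w * \<tau> y" .
    have "- (w * y) = (-1) * w * y" by simp
    then have t2: "\<tau> (- (w * y)) = \<tau> (-1) * \<tau> w * \<tau> y" using t2' by (rule ssubst)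
    have im1: "ring_inv (-1::'a) = -1" using ring_inv_minus[of "1::'a"] ring_inv_unique[of "1::'a" 1] by simp
    have t3: "cnj (\<tau> (-1)) = \<tau> (-1)" using mult_char_cnj[OF tau, of "-1"] im1 by (simp add: minus_unit)
    have t4: "\<tau> w * cnj (\<tau> w) = 1" using norm1_cnj[OF mult_char_norm[OF tau w]] by (simp add: mult.commute)
    have c1: "\<chi> (w * x * y) = \<chi> w * \<chi> x * \<chi> y" using chim w x y by (simp add: mult_char_def units_mult)
    have "g ((\<lambda>(w, (x, y)). (w * x, - (w * y))) q) =
        \<tau> (w * x) * cnj (\<tau> (- (w * y))) * \<psi> w * \<chi> (w * x * y)"
      using q e1 ki kiu kii by (simp add: g_def)
    also have "\<dots> = \<tau> (-1) * (\<tau> w * cnj (\<tau> w)) * \<tau> x * cnj (\<tau> y) * \<psi> w * \<chi> w * \<chi> x * \<chi> y"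
      unfolding t1 t2 c1 by (simp add: t3 ac_simps)
    also have "\<dots> = f q" using t4 q by (simp add: f_def ac_simps)
    finally show "g ((\<lambda>(w, (x, y)). (w * x, - (w * y))) q) = f q" .
  qed
  also have "(\<Sum>p\<in>?U \<times> Q. f p) = \<tau> (-1) * (?G * jacobi_sum (\<lambda>u. \<chi> u * \<tau> u) (\<lambda>u. \<chi> u * cnj (\<tau> u)))"
  proof -
    define h where "h = (\<lambda>(x::'a, y::'a). (\<chi> x * \<tau> x) * (\<chi> y * cnj (\<tau> y)))"
    have fe: "\<And>w q. f (w, q) = \<tau> (-1) * (\<psi> w * \<chi> w) * h q"
      unfolding f_def h_def by (simp add: split_def mult.assoc)
    have "(\<Sum>p\<in>?U \<times> Q. f p) = (\<Sum>w\<in>?U. \<Sum>q\<in>Q. f (w, q))"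
      by (rule sum.cartesian_product[symmetric, where g = "\<lambda>w q. f (w, q)", simplified])
    also have "\<dots> = (\<Sum>w\<in>?U. \<Sum>q\<in>Q. \<tau> (-1) * (\<psi> w * \<chi> w) * h q)" by (simp only: fe)
    also have "\<dots> = (\<Sum>w\<in>?U. \<tau> (-1) * (\<psi> w * \<chi> w) * (\<Sum>q\<in>Q. h q))"
      by (simp only: sum_distrib_left)
    also have "\<dots> = (\<Sum>w\<in>?U. \<tau> (-1) * (\<psi> w * \<chi> w)) * (\<Sum>q\<in>Q. h q)"
      by (simp only: sum_distrib_right)
    also have "\<dots> = \<tau> (-1) * (\<Sum>w\<in>?U. \<psi> w * \<chi> w) * (\<Sum>q\<in>Q. h q)"
      by (simp only: sum_distrib_left)
    also have "\<dots> = \<tau> (-1) * ((\<Sum>w\<in>?U. \<psi> w * \<chi> w) * (\<Sum>q\<in>Q. h q))"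
      by (rule mult.assoc)
    also have "(\<Sum>q\<in>Q. h q) = jacobi_sum (\<lambda>u. \<chi> u * \<tau> u) (\<lambda>u. \<chi> u * cnj (\<tau> u))"
      unfolding jacobi_sum_def Q_def h_def by (rule refl)
    finally show ?thesis unfolding gauss_sum_def .
  qed
  finally show ?thesis by (simp add: power2_eq_square ac_simps)
qed

end
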